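(* Let $(p_1,q_1),\ldots,(p_n,q_n)\in\mathbb{R}^2$ be a Pareto-optimal market and for $(p,q)\in\mathbb{R}^2$ let \[\operatorname{profit}(p,q)=(p-q)\cdot\bigl|\{i: p\le p_i \text{ and } q\ge q_i\}\bigr|.\] Let $q'\le q$ and let $p$ be such that $0<\operatorname{profit}(p,q)\le\operatorname{profit}(p,q')$. Then for every $p'\le p$, $\operatorname{profit}(p',q)\le\operatorname{profit}(p',q')$.
   Context: Customer $(p_i,q_i)$ considers product $(p,q)$ iff $p\le p_i$ and $q\ge q_i$. The market is Pareto-optimal: there are no two customers $i,j$ with $q_i>q_j$ and $p_i<p_j$. *)

theory Defs
  imports Main "HOL.Real"
begin

text \<open>A market of n customers (pp i, qq i), i < n.\<close>

definition pareto_optimal :: "nat \<Rightarrow> (nat \<Rightarrow> real) \<Rightarrow> (nat \<Rightarrow> real) \<Rightarrow> bool" where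
  "pareto_optimal n pp qq \<longleftrightarrow>
     \<not> (\<exists>i<n. \<exists>j<n. qq i > qq j \<and> pp i < pp j)"

definition profit :: "nat \<Rightarrow> (nat \<Rightarrow> real) \<Rightarrow> (nat \<Rightarrow> real) \<Rightarrow> real \<Rightarrow> real \<Rightarrow> real" where
  "profit n pp qq p q = (p - q) * real (card {i. i < n \<and> p \<le> pp i \<and> q \<ge> qq i})"

end

theory Submission
  imports Defs
begin

lemma split_card:
  fixes pp qq :: "nat \<Rightarrow> real" and x q q' :: real
  assumes "q' \<le> q"
  shows "card {i. i < n \<and> x \<le> pp i \<and> q \<ge> qq i}
       = card {i. i < n \<and> x \<le> pp i \<and> q' < qq i \<and> qq i \<le> q}
       + card {i. i < n \<and> x \<le> pp i \<and> q' \<ge> qq i}"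
proof -
  have "{i. i < n \<and> x \<le> pp i \<and> q \<ge> qq i}
      = {i. i < n \<and> x \<le> pp i \<and> q' < qq i \<and> qq i \<le> q}
      \<union> {i. i < n \<and> x \<le> pp i \<and> q' \<ge> qq i}" using assms by (auto simp: not_le)
  moreover have "finite {i. i < n \<and> x \<le> pp i \<and> q' < qq i \<and> qq i \<le> q}" by simp
  moreover have "finite {i. i < n \<and> x \<le> pp i \<and> q' \<ge> qq i}" by simp
  moreover have "{i. i < n \<and> x \<le> pp i \<and> q' < qq i \<and> qq i \<le> q} \<inter> {i. i < n \<and> x \<le> pp i \<and> q' \<ge> qq i} = {}" by auto
  ultimately show ?thesis by (simp only: card_Un_disjoint)
qed

theorem lemma2:
  fixes n :: nat and pp qq :: "nat \<Rightarrow> real" and p q q' :: real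
  assumes "pareto_optimal n pp qq"
    and "q' \<le> q"
    and "0 < profit n pp qq p q"
    and "profit n pp qq p q \<le> profit n pp qq p q'"
  shows "\<forall>p'. p' \<le> p \<longrightarrow> profit n pp qq p' q \<le> profit n pp qq p' q'"
proof (intro allI impI)
  fix p' assume pp': "p' \<le> p"
  define D where "D x = card {i. i < n \<and> x \<le> pp i \<and> q' < qq i \<and> qq i \<le> q}" for x
  define A where "A x = card {i. i < n \<and> x \<le> pp i \<and> q' \<ge> qq i}" for x
  have pq: "\<And>x. profit n pp qq x q = (x - q) * (real (D x) + real (A x))"
  proof -
    fix x
    have "real (card {i. i < n \<and> x \<le> pp i \<and> q \<ge> qq i}) = real (D x) + real (A x)"
      using split_card[OF assms(2), of n x pp qq] unfolding D_def A_def by simp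
    then show "profit n pp qq x q = (x - q) * (real (D x) + real (A x))"
      unfolding profit_def by simp
  qed
  have pq': "\<And>x. profit n pp qq x q' = (x - q') * real (A x)"
    unfolding profit_def A_def by simp
  have "A p \<noteq> 0"
  proof
    assume "A p = 0"
    then have "profit n pp qq p q' = 0" using pq' by simp
    with assms(3,4) show False by simp
  qed
  then obtain j where j: "j < n" "p \<le> pp j" "qq j \<le> q'"
  proof -
    have "{i. i < n \<and> p \<le> pp i \<and> q' \<ge> qq i} \<noteq> {}" using \<open>A p \<noteq> 0\<close> unfolding A_def by force
    then show ?thesis using that by blast
  qed
  have "{i. i < n \<and> p' \<le> pp i \<and> q' < qq i \<and> qq i \<le> q} = {i. i < n \<and> p \<le> pp i \<and> q' < qq i \<and> qq i \<le> q}"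
  proof -
    { fix i assume "i < n" "q' < qq i"
      then have "qq i > qq j" using j by simp
      then have "\<not> pp i < pp j" using assms(1) j \<open>i < n\<close> unfolding pareto_optimal_def by blast
      then have "pp j \<le> pp i" by simp }
    then show ?thesis using pp' j by (auto intro: order_trans)
  qed
  then have DD: "D p' = D p" unfolding D_def by simp
  have "A p \<le> A p'" unfolding A_def
    by (rule card_mono) (use pp' in auto)
  have pos: "p - q > 0"
    proof -
    have "0 < (p - q) * (real (D p) + real (A p))" using assms(3) pq by simp
    then show ?thesis by (simp add: zero_less_mult_iff)
  qed
  have h: "(p - q) * real (D p) \<le> (q - q') * real (A p)"
    using assms(4) pq pq' by (simp add: algebra_simps)
  have "(p' - q) * real (D p) \<le> (p - q) * real (D p)"
    using pp' by (simp add: mult_right_mono)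
  also note h
  also have "(q - q') * real (A p) \<le> (q - q') * real (A p')"
    using \<open>A p \<le> A p'\<close> assms(2) by (simp add: mult_left_mono)
  finally have "(p' - q) * real (D p') \<le> (q - q') * real (A p')" using DD by simp
  then show "profit n pp qq p' q \<le> profit n pp qq p' q'"
    unfolding pq[of p'] pq'[of p'] by (simp add: algebra_simps)
qed

end
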